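(* Let $n\ge 4$, distances $d_{ij}>0$, $e_{ij}=\tan^{-1}(d_{ij})$, and fix $\beta$ with $\sin(\pi\beta)\neq 0$. Fix a state $(s,d,e,t)$ and two distinct unexplored nodes $a,b\neq t$, and let $\gamma^\#>0$ satisfy $\cos(\gamma^\# e_{ab})=0$. For $c\in\{a,b\}$ define $$g_c(\gamma)=d_{tc}\sin(\pi\beta)\sin(\gamma e_{tc})\prod_{k\in\{1,\dots,n\}\setminus\{t,a,b\}}\cos(\gamma e_{ck}),$$ so that $Q((s,d,e,t),c;(\gamma,\beta))=\cos(\gamma e_{ab})\,g_c(\gamma)$. Assume $g_a(\gamma^\#)\neq g_b(\gamma^\#)$. Then there exists $\delta>0$ such that for every $\varepsilon\in(0,\delta)$: (i) the relative order of the Q-values of $a$ and $b$ inverts across $\gamma^\#$: $\operatorname{sign}\big(Q(\cdot,a;(\gamma^\#-\varepsilon,\beta))-Q(\cdot,b;(\gamma^\#-\varepsilon,\beta))\big)=-\operatorname{sign}\big(Q(\cdot,a;(\gamma^\#+\varepsilon,\beta))-Q(\cdot,b;(\gamma^\#+\varepsilon,\beta))\big)\neq 0$; (ii) if $a$ (resp. $b$) is a maximizer of the Q-values over unexplored nodes at $\gamma^\#-\varepsilon$ (or at $\gamma^\#+\varepsilon$), then it is not a maximizer at the other parameter value $\gamma^\#\pm\varepsilon$; in particular the greedy policy is policy critical at $\gamma^\#$, i.e. $\pi((s,d,e,t);(\gamma^\#-\varepsilon,\beta))\neq\pi((s,d,e,t);(\gamma^\#+\varepsilon,\beta))$.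
   Context: TSP instance: $n$ nodes, $d_{ij}=d_{ji}>0$ is the Euclidean distance between nodes $i\neq j$, and scaled edge weights $e_{ij}=\tan^{-1}(d_{ij})$. A state is a tuple $(s,d,e,t)$ with $s\in\{0,\pi\}^n$, $s_i=\pi$ iff node $i$ is unvisited, and $t$ the current node. The depth-1 EQC Q-value for moving to unexplored $a\neq t$ is $Q((s,d,e,t),a;(\gamma,\beta)) = d_{ta}\sin(\pi\beta)\sin(\gamma e_{ta})\prod_{k\in\{1,\dots,n\}\setminus\{t,a\}}\cos(\gamma e_{ak})$, and the greedy policy $\pi((s,d,e,t);(\gamma,\beta))$ is a maximizer of this Q-value over unexplored nodes. The policy is called critical at $\gamma_0$ (for a given $\delta>0$) if $\pi((s,d,e,t);(\gamma_0-\delta,\beta))\neq\pi((s,d,e,t);(\gamma_0+\delta,\beta))$. *)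

theory Defs
  imports Complex_Main
begin

text \<open>Nodes are 1..n. d is the distance function, e the scaled edge weights,
  t the current node. The depth-1 EQC Q-value for moving to node a.\<close>

definition Q :: "nat \<Rightarrow> (nat \<Rightarrow> nat \<Rightarrow> real) \<Rightarrow> (nat \<Rightarrow> nat \<Rightarrow> real) \<Rightarrow> nat \<Rightarrow> nat
    \<Rightarrow> real \<Rightarrow> real \<Rightarrow> real" where
  "Q n d e t a \<gamma> \<beta> =
     d t a * sin (pi * \<beta>) * sin (\<gamma> * e t a) *
     (\<Prod>k\<in>{1..n} - {t, a}. cos (\<gamma> * e a k))"

text \<open>Unexplored candidate nodes: s i = pi (unvisited) and i different from t.\<close>

definition unexplored :: "nat \<Rightarrow> (nat \<Rightarrow> real) \<Rightarrow> nat \<Rightarrow> nat set" where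
  "unexplored n s t = {i \<in> {1..n}. s i = pi \<and> i \<noteq> t}"

definition is_greedy :: "nat \<Rightarrow> (nat \<Rightarrow> real) \<Rightarrow> (nat \<Rightarrow> nat \<Rightarrow> real) \<Rightarrow> (nat \<Rightarrow> nat \<Rightarrow> real)
    \<Rightarrow> nat \<Rightarrow> real \<Rightarrow> real \<Rightarrow> nat \<Rightarrow> bool" where
  "is_greedy n s d e t \<gamma> \<beta> a \<longleftrightarrow>
     a \<in> unexplored n s t \<and> (\<forall>b \<in> unexplored n s t. Q n d e t b \<gamma> \<beta> \<le> Q n d e t a \<gamma> \<beta>)"

definition g :: "nat \<Rightarrow> (nat \<Rightarrow> nat \<Rightarrow> real) \<Rightarrow> (nat \<Rightarrow> nat \<Rightarrow> real) \<Rightarrow> nat \<Rightarrow> nat \<Rightarrow> nat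
    \<Rightarrow> nat \<Rightarrow> real \<Rightarrow> real \<Rightarrow> real" where
  "g n d e t a b c \<gamma> \<beta> =
     d t c * sin (pi * \<beta>) * sin (\<gamma> * e t c) *
     (\<Prod>k\<in>{1..n} - {t, a, b}. cos (\<gamma> * e c k))"

end

theory Submission
  imports Defs
begin

theorem proposition1:
  fixes n :: nat and d e :: "nat \<Rightarrow> nat \<Rightarrow> real" and s :: "nat \<Rightarrow> real"
    and t a b :: nat and \<beta> \<gamma>0 :: real
  assumes n4: "n \<ge> 4"
    and dpos: "\<And>i j. i \<in> {1..n} \<Longrightarrow> j \<in> {1..n} \<Longrightarrow> i \<noteq> j \<Longrightarrow> d i j > 0"
    and dsym: "\<And>i j. i \<in> {1..n} \<Longrightarrow> j \<in> {1..n} \<Longrightarrow> d i j = d j i"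
    and edef: "\<And>i j. e i j = arctan (d i j)"
    and s_vals: "\<And>i. i \<in> {1..n} \<Longrightarrow> s i = 0 \<or> s i = pi"
    and t_node: "t \<in> {1..n}"
    and a_unexp: "a \<in> unexplored n s t"
    and b_unexp: "b \<in> unexplored n s t"
    and ab: "a \<noteq> b"
    and beta: "sin (pi * \<beta>) \<noteq> 0"
    and gpos: "\<gamma>0 > 0"
    and gcos: "cos (\<gamma>0 * e a b) = 0"
    and gdiff: "g n d e t a b a \<gamma>0 \<beta> \<noteq> g n d e t a b b \<gamma>0 \<beta>"
  shows "\<exists>\<delta>>0. \<forall>\<epsilon>. 0 < \<epsilon> \<and> \<epsilon> < \<delta> \<longrightarrow>
     (sgn (Q n d e t a (\<gamma>0 - \<epsilon>) \<beta> - Q n d e t b (\<gamma>0 - \<epsilon>) \<beta>)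
        = - sgn (Q n d e t a (\<gamma>0 + \<epsilon>) \<beta> - Q n d e t b (\<gamma>0 + \<epsilon>) \<beta>)
      \<and> sgn (Q n d e t a (\<gamma>0 + \<epsilon>) \<beta> - Q n d e t b (\<gamma>0 + \<epsilon>) \<beta>) \<noteq> 0)
   \<and> (\<forall>c\<in>{a, b}.
        (is_greedy n s d e t (\<gamma>0 - \<epsilon>) \<beta> c \<longrightarrow> \<not> is_greedy n s d e t (\<gamma>0 + \<epsilon>) \<beta> c)
      \<and> (is_greedy n s d e t (\<gamma>0 + \<epsilon>) \<beta> c \<longrightarrow> \<not> is_greedy n s d e t (\<gamma>0 - \<epsilon>) \<beta> c))
   \<and> (\<forall>p1 p2. is_greedy n s d e t (\<gamma>0 - \<epsilon>) \<beta> p1 \<and> is_greedy n s d e t (\<gamma>0 + \<epsilon>) \<beta> p2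
        \<and> (p1 \<in> {a, b} \<or> p2 \<in> {a, b}) \<longrightarrow> p1 \<noteq> p2)"
proof -
  have a1: "a \<in> {1..n}" "a \<noteq> t" using a_unexp by (auto simp: unexplored_def)
  have b1: "b \<in> {1..n}" "b \<noteq> t" using b_unexp by (auto simp: unexplored_def)
  have eab: "e b a = e a b" using edef dsym a1 b1 by simp
  have dab: "d a b > 0" using dpos a1 b1 ab by simp
  define E where "E = e a b"
  have E0: "E > 0" using dab edef unfolding E_def by (simp add: arctan_less_zero_iff)
  define h where "h = (\<lambda>\<gamma>. g n d e t a b a \<gamma> \<beta> - g n d e t a b b \<gamma> \<beta>)"
  have Qa: "Q n d e t a \<gamma> \<beta> = cos (\<gamma> * E) * g n d e t a b a \<gamma> \<beta>" for \<gamma>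
  proof -
    have S: "{1..n} - {t, a} = insert b ({1..n} - {t, a, b})" using b1 ab by blast
    have P: "(\<Prod>k\<in>{1..n} - {t, a}. cos (\<gamma> * e a k)) = cos (\<gamma> * e a b) * (\<Prod>k\<in>{1..n} - {t, a, b}. cos (\<gamma> * e a k))"
      unfolding S by (rule prod.insert) auto
    show ?thesis unfolding Q_def g_def E_def P by (simp only: mult_ac)
  qed
  have Qb: "Q n d e t b \<gamma> \<beta> = cos (\<gamma> * E) * g n d e t a b b \<gamma> \<beta>" for \<gamma>
  proof -
    have S: "{1..n} - {t, b} = insert a ({1..n} - {t, a, b})" using a1 ab by blast
    have P: "(\<Prod>k\<in>{1..n} - {t, b}. cos (\<gamma> * e b k)) = cos (\<gamma> * e b a) * (\<Prod>k\<in>{1..n} - {t, a, b}. cos (\<gamma> * e b k))"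
      unfolding S by (rule prod.insert) auto
    show ?thesis unfolding Q_def g_def E_def P eab by (simp only: mult_ac)
  qed
  have D: "Q n d e t a \<gamma> \<beta> - Q n d e t b \<gamma> \<beta> = cos (\<gamma> * E) * h \<gamma>" for \<gamma>
    unfolding Qa Qb h_def by (simp add: algebra_simps)
  have h0: "h \<gamma>0 \<noteq> 0" using gdiff unfolding h_def by simp
  have hc: "isCont h \<gamma>0" unfolding h_def g_def by (intro continuous_intros)
  obtain \<delta>1 where d1: "\<delta>1 > 0" and d1h0: "\<forall>x. x \<noteq> \<gamma>0 \<and> norm (x - \<gamma>0) < \<delta>1 \<longrightarrow> norm (h x - h \<gamma>0) < \<bar>h \<gamma>0\<bar>"
    using LIM_D[OF hc[unfolded isCont_def], of "\<bar>h \<gamma>0\<bar>"] h0 by auto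
  have d1h: "\<bar>h x - h \<gamma>0\<bar> < \<bar>h \<gamma>0\<bar>" if "\<bar>x - \<gamma>0\<bar> < \<delta>1" for x
  proof (cases "x = \<gamma>0")
    case True then show ?thesis using h0 by simp
  next
    case False then show ?thesis using d1h0 that by auto
  qed
  have hpos: "h x * h \<gamma>0 > 0" if "\<bar>x - \<gamma>0\<bar> < \<delta>1" for x
  proof -
    have "\<bar>h x - h \<gamma>0\<bar> < \<bar>h \<gamma>0\<bar>" using d1h that by blast
    then show ?thesis by (cases "h \<gamma>0 > 0") (auto simp: abs_if mult_pos_pos mult_neg_neg split: if_splits)
  qed
  define x0 where "x0 = \<gamma>0 * E"
  have cx0: "cos x0 = 0" using gcos unfolding x0_def E_def .
  have sx0: "sin x0 \<noteq> 0" using sin_cos_squared_add[of x0] cx0 by auto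
  define \<delta> where "\<delta> = min \<delta>1 (pi / E)"
  have "\<delta> > 0" using d1 E0 unfolding \<delta>_def by simp
  have key: "(sgn (Q n d e t a (\<gamma>0 - \<epsilon>) \<beta> - Q n d e t b (\<gamma>0 - \<epsilon>) \<beta>)
        = - sgn (Q n d e t a (\<gamma>0 + \<epsilon>) \<beta> - Q n d e t b (\<gamma>0 + \<epsilon>) \<beta>)
      \<and> sgn (Q n d e t a (\<gamma>0 + \<epsilon>) \<beta> - Q n d e t b (\<gamma>0 + \<epsilon>) \<beta>) \<noteq> 0)
    \<and> \<not> (is_greedy n s d e t (\<gamma>0 - \<epsilon>) \<beta> a \<and> is_greedy n s d e t (\<gamma>0 + \<epsilon>) \<beta> a)
    \<and> \<not> (is_greedy n s d e t (\<gamma>0 - \<epsilon>) \<beta> b \<and> is_greedy n s d e t (\<gamma>0 + \<epsilon>) \<beta> b)"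
    if ep: "0 < \<epsilon> \<and> \<epsilon> < \<delta>" for \<epsilon>
  proof -
    have epE: "0 < \<epsilon> * E" "\<epsilon> * E < pi" using ep E0 unfolding \<delta>_def
      by (auto simp: field_simps)
    have se: "sin (\<epsilon> * E) > 0" using epE sin_gt_zero by blast
    have cm: "cos ((\<gamma>0 - \<epsilon>) * E) = sin x0 * sin (\<epsilon> * E)"
      unfolding x0_def by (simp add: left_diff_distrib cos_diff cx0[unfolded x0_def])
    have cp: "cos ((\<gamma>0 + \<epsilon>) * E) = - (sin x0 * sin (\<epsilon> * E))"
      unfolding x0_def by (simp add: distrib_right cos_add cx0[unfolded x0_def])
    have hm: "h (\<gamma>0 - \<epsilon>) * h \<gamma>0 > 0" using hpos ep unfolding \<delta>_def by simp
    have hp: "h (\<gamma>0 + \<epsilon>) * h \<gamma>0 > 0" using hpos ep unfolding \<delta>_def by simp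
    have hh: "h (\<gamma>0 - \<epsilon>) * h (\<gamma>0 + \<epsilon>) > 0"
    proof -
      have "(h (\<gamma>0 - \<epsilon>) * h \<gamma>0) * (h (\<gamma>0 + \<epsilon>) * h \<gamma>0) > 0" using hm hp by simp
      hence "(h (\<gamma>0 - \<epsilon>) * h (\<gamma>0 + \<epsilon>)) * (h \<gamma>0 * h \<gamma>0) > 0" by (simp add: algebra_simps)
      thus ?thesis using h0 by (simp add: zero_less_mult_iff)
    qed
    define Dm where "Dm = Q n d e t a (\<gamma>0 - \<epsilon>) \<beta> - Q n d e t b (\<gamma>0 - \<epsilon>) \<beta>"
    define Dp where "Dp = Q n d e t a (\<gamma>0 + \<epsilon>) \<beta> - Q n d e t b (\<gamma>0 + \<epsilon>) \<beta>"
    have "Dm * Dp = - ((sin x0 * sin (\<epsilon> * E))^2 * (h (\<gamma>0 - \<epsilon>) * h (\<gamma>0 + \<epsilon>)))"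
      unfolding Dm_def Dp_def D cm cp by (simp add: power2_eq_square algebra_simps)
    moreover have "(sin x0 * sin (\<epsilon> * E))^2 > 0" using sx0 se by simp
    ultimately have neg: "Dm * Dp < 0" using hh by (simp add: mult_pos_pos)
    have s1: "sgn Dm = - sgn Dp \<and> sgn Dp \<noteq> 0"
      using neg by (auto simp: sgn_if mult_less_0_iff)
    have nA: "\<not> (0 \<le> Dm \<and> 0 \<le> Dp)" using neg by (metis mult_nonneg_nonneg not_less)
    have nB: "\<not> (Dm \<le> 0 \<and> Dp \<le> 0)" using neg by (metis mult_nonpos_nonpos not_less)
    have ga: "\<not> (is_greedy n s d e t (\<gamma>0 - \<epsilon>) \<beta> a \<and> is_greedy n s d e t (\<gamma>0 + \<epsilon>) \<beta> a)"
      using nA b_unexp unfolding is_greedy_def Dm_def Dp_def by auto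
    have gb: "\<not> (is_greedy n s d e t (\<gamma>0 - \<epsilon>) \<beta> b \<and> is_greedy n s d e t (\<gamma>0 + \<epsilon>) \<beta> b)"
      using nB a_unexp unfolding is_greedy_def Dm_def Dp_def by auto
    show ?thesis using s1 ga gb unfolding Dm_def Dp_def by blast
  qed
  show ?thesis using key \<open>\<delta> > 0\<close> by (intro exI[of _ \<delta>]) blast
qed

end
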